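(* Let $G$ be a finite group with $|G| = mp^k$, where $p$ is a prime, $k \geq 1$, and $m$ is a natural number such that $1 < m/q < p < m$, where $q$ is the smallest prime divisor of $m$. If $P$ and $R$ are distinct Sylow $p$-subgroups of $G$, then $G = \langle P, R\rangle$ and $P \cap R = O_p(G)$ has order $p^{k-1}$.
   Context: $O_p(G)$ denotes the largest normal $p$-subgroup of $G$. *)

theory Defs
  imports "HOL-Algebra.Algebra"
begin

definition p_subgroup :: "('a, 'b) monoid_scheme \<Rightarrow> nat \<Rightarrow> 'a set \<Rightarrow> bool" where
  "p_subgroup G p H \<longleftrightarrow> subgroup H G \<and> (\<exists>n. card H = p ^ n)"

definition sylow_subgroup :: "('a, 'b) monoid_scheme \<Rightarrow> nat \<Rightarrow> 'a set \<Rightarrow> bool" where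
  "sylow_subgroup G p P \<longleftrightarrow> subgroup P G \<and> card P = p ^ multiplicity p (order G)"

text \<open>O_p(G), the largest normal p-subgroup: in a finite group it is the union
  of all normal p-subgroups (the product of normal p-subgroups is again one).\<close>
definition O_p :: "('a, 'b) monoid_scheme \<Rightarrow> nat \<Rightarrow> 'a set" where
  "O_p G p = \<Union> {N. N \<lhd> G \<and> p_subgroup G p N}"

end

theory Submission
  imports Defs
begin

context group begin

lemma sub_card_dvd:
  assumes "subgroup H G" "subgroup K G" "H \<subseteq> K"
  shows "card H dvd card K"
proof -
  interpret K: group "G\<lparr>carrier := K\<rparr>" using assms(2) subgroup_imp_group by blast
  have "subgroup H (G\<lparr>carrier := K\<rparr>)" using subgroup_incl assms by blast
  from K.lagrange[OF this] have "card (rcosets\<^bsub>G\<lparr>carrier := K\<rparr>\<^esub> H) * card H = card K" by (simp add: order_def)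
  thus ?thesis by (metis dvd_triv_right)
qed

lemma prod_formula:
  assumes fin: "finite (carrier G)" and H: "subgroup H G" and K: "subgroup K G"
  shows "card (H <#> K) * card (H \<inter> K) = card H * card K"
proof -
  have HG: "H \<subseteq> carrier G" and KG: "K \<subseteq> carrier G" using H K subgroup.subset by auto
  have finH: "finite H" "finite K" using HG KG fin finite_subset by auto
  define f where "f = (\<lambda>(h,k). h \<otimes> k)"
  define A where "A = H \<times> K"
  have fA: "f ` A = H <#> K" unfolding f_def A_def set_mult_def by force
  have finA: "finite A" using finH A_def by auto
  have part: "A = (\<Union>z\<in>f ` A. {a\<in>A. f a = z})" by auto
  have "card A = (\<Sum>z\<in>f ` A. card {a\<in>A. f a = z})"
    apply (subst part)
    apply (rule card_UN_disjoint)
    using finA by auto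
  also have "\<dots> = (\<Sum>z\<in>f ` A. card (H \<inter> K))"
  proof (rule sum.cong[OF refl])
    fix z assume "z \<in> f ` A"
    then obtain h0 k0 where h0: "h0 \<in> H" and k0: "k0 \<in> K" and z: "z = h0 \<otimes> k0"
      unfolding A_def f_def by auto
    have h0G: "h0 \<in> carrier G" and k0G: "k0 \<in> carrier G" using h0 k0 HG KG by auto
    have "bij_betw (\<lambda>d. (h0 \<otimes> d, inv d \<otimes> k0)) (H \<inter> K) {a\<in>A. f a = z}"
    proof (rule bij_betw_imageI)
      show "inj_on (\<lambda>d. (h0 \<otimes> d, inv d \<otimes> k0)) (H \<inter> K)"
        proof (rule inj_onI)
          fix x y assume "x \<in> H \<inter> K" "y \<in> H \<inter> K" and e: "(h0 \<otimes> x, inv x \<otimes> k0) = (h0 \<otimes> y, inv y \<otimes> k0)"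
          hence "x \<in> carrier G" "y \<in> carrier G" using HG by auto
          thus "x = y" using e h0G by simp
        qed
      show "(\<lambda>d. (h0 \<otimes> d, inv d \<otimes> k0)) ` (H \<inter> K) = {a\<in>A. f a = z}"
      proof
        show "(\<lambda>d. (h0 \<otimes> d, inv d \<otimes> k0)) ` (H \<inter> K) \<subseteq> {a\<in>A. f a = z}"
        proof
          fix y assume "y \<in> (\<lambda>d. (h0 \<otimes> d, inv d \<otimes> k0)) ` (H \<inter> K)"
          then obtain d where d: "d \<in> H" "d \<in> K" and y: "y = (h0 \<otimes> d, inv d \<otimes> k0)" by auto
          have dG: "d \<in> carrier G" using d HG by auto
          have "h0 \<otimes> d \<in> H" using subgroup.m_closed[OF H h0 d(1)] .
          moreover have "inv d \<otimes> k0 \<in> K" using subgroup.m_closed[OF K subgroup.m_inv_closed[OF K d(2)] k0] .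
          moreover have "h0 \<otimes> d \<otimes> (inv d \<otimes> k0) = z"
            using dG h0G k0G z by (simp add: m_assoc[symmetric]) (simp add: m_assoc)
          ultimately show "y \<in> {a\<in>A. f a = z}" using y unfolding A_def f_def by auto
        qed
      next
        show "{a\<in>A. f a = z} \<subseteq> (\<lambda>d. (h0 \<otimes> d, inv d \<otimes> k0)) ` (H \<inter> K)"
        proof
          fix a assume "a \<in> {a\<in>A. f a = z}"
          then obtain h k where a: "a = (h,k)" "h \<in> H" "k \<in> K" "h \<otimes> k = z"
            unfolding A_def f_def by auto
          have hG: "h \<in> carrier G" and kG: "k \<in> carrier G" using a HG KG by auto
          define d where "d = inv h0 \<otimes> h"
          have dH: "d \<in> H" unfolding d_def using subgroup.m_closed[OF H subgroup.m_inv_closed[OF H h0] a(2)] .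
          have eq: "d = k0 \<otimes> inv k"
          proof -
            have hk: "h \<otimes> k = h0 \<otimes> k0" using a z by simp
            have "inv h0 \<otimes> h = inv h0 \<otimes> (h \<otimes> k) \<otimes> inv k" using hG kG h0G by (simp add: m_assoc)
            also have "\<dots> = inv h0 \<otimes> (h0 \<otimes> k0) \<otimes> inv k" using hk by simp
            also have "\<dots> = k0 \<otimes> inv k" using kG h0G k0G by (simp add: m_assoc[symmetric])
            finally show ?thesis unfolding d_def .
          qed
          have "inv k \<in> K" using K a(3) by (rule subgroup.m_inv_closed)
          hence dK: "d \<in> K" unfolding eq using K k0 by (meson subgroup.m_closed)
          have dG: "d \<in> carrier G" using dH HG by auto
          have "h0 \<otimes> d = h" unfolding d_def using h0G hG by (simp add: m_assoc[symmetric])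
          moreover have "inv d \<otimes> k0 = k" using eq kG k0G dG
            by (simp add: inv_mult_group m_assoc)
          ultimately show "a \<in> (\<lambda>d. (h0 \<otimes> d, inv d \<otimes> k0)) ` (H \<inter> K)"
            using a dH dK by (intro image_eqI[of _ _ d]) auto
        qed
      qed
    qed
    thus "card {a\<in>A. f a = z} = card (H \<inter> K)" by (simp add: bij_betw_same_card)
  qed
  also have "\<dots> = card (f ` A) * card (H \<inter> K)" by simp
  finally have "card A = card (f ` A) * card (H \<inter> K)" .
  moreover have "card A = card H * card K" unfolding A_def by (rule card_cartesian_product)
  ultimately show ?thesis using fA by simp
qed


lemma inv_cancel_left_aux:
  "x \<in> carrier G \<Longrightarrow> y \<in> carrier G \<Longrightarrow> inv x \<otimes> (x \<otimes> y) = y"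
  by (simp add: m_assoc[symmetric])

lemma normal_idx:
  assumes fin: "finite (carrier G)" and pp: "Factorial_Ring.prime p"
    and D: "subgroup D G" and P: "subgroup P G" and DP: "D \<subseteq> P"
    and cP: "card P = p ^ k" and cD: "card D = p ^ (k - 1)" and k: "k \<ge> 1"
    and x: "x \<in> P" and h: "h \<in> D"
  shows "x \<otimes> h \<otimes> inv x \<in> D"
proof -
  have PG: "P \<subseteq> carrier G" and DG: "D \<subseteq> carrier G" using P D subgroup.subset by auto
  have xG: "x \<in> carrier G" using x PG by auto
  have finD: "finite D" "finite P" using fin PG DG finite_subset by auto
  have p1: "p > 1" using pp prime_gt_1_nat by blast
  define E where "E = (\<lambda>d. x \<otimes> d \<otimes> inv x) ` D"
  have EP: "E \<subseteq> P" unfolding E_def using P x DP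
    by (auto intro!: subgroup.m_closed subgroup.m_inv_closed)
  have injc: "inj_on (\<lambda>d. x \<otimes> d \<otimes> inv x) D"
  proof (rule inj_onI)
    fix a b assume "a \<in> D" "b \<in> D" and e: "x \<otimes> a \<otimes> inv x = x \<otimes> b \<otimes> inv x"
    hence aG: "a \<in> carrier G" and bG: "b \<in> carrier G" using DG by auto
    have "x \<otimes> a = x \<otimes> b" using e aG bG xG by (metis inv_closed m_closed r_cancel)
    thus "a = b" using aG bG xG by simp
  qed
  have cE: "card E = card D" unfolding E_def using injc by (rule card_image)
  have subE: "subgroup E G"
  proof (rule subgroupI)
    show "E \<subseteq> carrier G" using EP PG by auto
    show "E \<noteq> {}" unfolding E_def using D subgroup.one_closed by blast
  next
    fix a assume "a \<in> E"
    then obtain d where d: "d \<in> D" and a: "a = x \<otimes> d \<otimes> inv x" unfolding E_def by auto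
    have dG: "d \<in> carrier G" using d DG by auto
    have "inv a = x \<otimes> inv d \<otimes> inv x" using a dG xG by (simp add: inv_mult_group m_assoc)
    moreover have "inv d \<in> D" using D d by (rule subgroup.m_inv_closed)
    ultimately show "inv a \<in> E" unfolding E_def by auto
  next
    fix a b assume "a \<in> E" "b \<in> E"
    then obtain c d where c: "c \<in> D" and a: "a = x \<otimes> c \<otimes> inv x"
       and d: "d \<in> D" and b: "b = x \<otimes> d \<otimes> inv x" unfolding E_def by auto
    have cG: "c \<in> carrier G" and dG: "d \<in> carrier G" using c d DG by auto
    have "a \<otimes> b = x \<otimes> (c \<otimes> d) \<otimes> inv x" using a b cG dG xG by (simp add: m_assoc inv_cancel_left_aux)
    moreover have "c \<otimes> d \<in> D" using D c d by (rule subgroup.m_closed)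
    ultimately show "a \<otimes> b \<in> E" unfolding E_def by auto
  qed
  have "E = D"
  proof (rule ccontr)
    assume EneD: "E \<noteq> D"
    have finE: "finite E" using finD cE EP finite_subset by blast
    have xD: "x \<notin> D"
    proof
      assume "x \<in> D"
      hence "E \<subseteq> D" unfolding E_def using D
        by (auto intro!: subgroup.m_closed subgroup.m_inv_closed)
      hence "E = D" using cE finD by (simp add: card_subset_eq)
      thus False using EneD by simp
    qed
    have sDE: "subgroup (D \<inter> E) G" using D subE by (rule subgroups_Inter_pair)
    have "card (D \<inter> E) dvd card D" using sub_card_dvd[OF sDE D] by auto
    then obtain b where b: "b \<le> k - 1" and cDE: "card (D \<inter> E) = p ^ b"
      using cD divides_primepow_nat[OF pp] by auto
    have "b \<noteq> k - 1"
    proof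
      assume "b = k - 1"
      hence "D \<inter> E = D" using cDE cD finD by (metis Int_lower1 card_subset_eq)
      hence "D \<subseteq> E" by auto
      hence "D = E" using cE finE by (simp add: card_subset_eq)
      thus False using EneD by simp
    qed
    hence bk: "b + 2 \<le> k" using b by auto
    have pf: "card (D <#> E) * p ^ b = p ^ (k - 1) * p ^ (k - 1)"
      using prod_formula[OF fin D subE] cDE cD cE by simp
    have "(k - 1) + (k - 1) = k + (k - 2)" using bk by arith
    hence "p ^ (k - 1) * p ^ (k - 1) = p ^ k * p ^ (k - 2)"
      by (metis power_add)
    also have "\<dots> \<ge> p ^ k * p ^ b" using bk p1 by (simp add: power_increasing)
    finally have "p ^ k * p ^ b \<le> card (D <#> E) * p ^ b" using pf by simp
    hence big: "p ^ k \<le> card (D <#> E)" using p1 by simp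
    define S where "S = (\<lambda>y. y \<otimes> x) ` (D <#> E)"
    have DEG: "D <#> E \<subseteq> carrier G" using DG EP PG setmult_subset_G by blast
    have "inj_on (\<lambda>y. y \<otimes> x) (D <#> E)"
    proof (rule inj_onI)
      fix a b assume "a \<in> D <#> E" "b \<in> D <#> E" and e: "a \<otimes> x = b \<otimes> x"
      hence "a \<in> carrier G" "b \<in> carrier G" using DEG by auto
      thus "a = b" using e xG by simp
    qed
    hence cS: "card S = card (D <#> E)" unfolding S_def by (rule card_image)
    have "S \<subseteq> P - D"
    proof
      fix s assume "s \<in> S"
      then obtain c e where c: "c \<in> D" and e: "e \<in> D" and s: "s = c \<otimes> (x \<otimes> e \<otimes> inv x) \<otimes> x"
        unfolding S_def set_mult_def E_def by auto
      have cG: "c \<in> carrier G" and eG: "e \<in> carrier G" using c e DG by auto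
      have s2: "s = c \<otimes> x \<otimes> e" using s cG eG xG by (simp add: m_assoc)
      have "s \<in> P" unfolding s2 using P c e x DP
        by (meson subgroup.m_closed subsetD)
      moreover have "s \<notin> D"
      proof
        assume sD: "s \<in> D"
        have "x = inv c \<otimes> s \<otimes> inv e" unfolding s2 using cG eG xG
          by (simp add: m_assoc[symmetric]) (simp add: m_assoc)
        moreover have "inv c \<otimes> s \<otimes> inv e \<in> D" using D c sD e
          by (meson subgroup.m_closed subgroup.m_inv_closed)
        ultimately show False using xD by simp
      qed
      ultimately show "s \<in> P - D" by simp
    qed
    hence "card S \<le> card (P - D)" using finD by (simp add: card_mono)
    also have "card (P - D) = p ^ k - p ^ (k - 1)" using finD DP cP cD by (simp add: card_Diff_subset)
    finally have "p ^ k \<le> p ^ k - p ^ (k - 1)" using cS big by simp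
    moreover have "p ^ (k - 1) > 0" "p ^ (k - 1) \<le> p ^ k" using p1 by (auto simp: power_increasing)
    ultimately show False by linarith
  qed
  thus ?thesis using h unfolding E_def by (metis image_eqI)
qed

end

lemma numfacts:
  fixes p q m :: nat
  assumes pp: "Factorial_Ring.prime p" and qp: "Factorial_Ring.prime q" and qm: "q dvd m"
    and qmin: "\<forall>r. Factorial_Ring.prime r \<and> r dvd m \<longrightarrow> q \<le> r"
    and h1: "1 < real m / real q" and h2: "real m / real q < real p" and pm: "p < m"
  shows "\<forall>d. d dvd m \<and> p \<le> d \<longrightarrow> d = m" and "\<not> p dvd m" and "m < p ^ 2"
proof -
  have q0: "q > 0" using qp prime_gt_0_nat by blast
  have "real q < real m" using h1 q0 by (simp add: less_divide_eq)
  hence qlm: "q < m" by simp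
  have "real m < real p * real q" using h2 q0 by (simp add: divide_less_eq)
  hence "real m < real (p * q)" by (simp only: of_nat_mult)
  hence mpq: "m < p * q" by (simp only: of_nat_less_iff)
  have m0: "m > 0" using qlm by simp
  have key: "q \<le> e" if "e dvd m" "e > 1" for e
  proof -
    have "e \<noteq> 1" using that(2) by simp
    then obtain r where r: "Factorial_Ring.prime r" "r dvd e" using prime_factor_nat[of e] by blast
    have "r \<le> e" using r(2) that(2) by (simp add: dvd_imp_le)
    moreover have "r dvd m" using r(2) that(1) by (rule dvd_trans)
    moreover have "q \<le> r" using qmin r(1) \<open>r dvd m\<close> by blast
    ultimately show ?thesis by simp
  qed
  show D: "\<forall>d. d dvd m \<and> p \<le> d \<longrightarrow> d = m"
  proof (intro allI impI)
    fix d assume d: "d dvd m \<and> p \<le> d"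
    then obtain e where e: "m = d * e" by blast
    show "d = m"
    proof (rule ccontr)
      assume "d \<noteq> m"
      hence "e \<noteq> 1" using e by auto
      moreover have "e \<noteq> 0" using e m0 by auto
      ultimately have "e > 1" by simp
      hence "q \<le> e" using key[of e] e by simp
      hence "d * q \<le> d * e" by simp
      hence "d * q < p * q" using mpq e by linarith
      hence "d < p" using q0 by simp
      thus False using d by simp
    qed
  qed
  show "\<not> p dvd m" using D pm by auto
  obtain t where t: "m = q * t" using qm by blast
  have "t \<noteq> 0" using t m0 by auto
  moreover have "t \<noteq> 1" using t qlm by auto
  ultimately have "t > 1" by simp
  hence "q \<le> t" using key[of t] t by simp
  hence "q * q \<le> q * t" by simp
  hence "q * q < p * q" using mpq t by linarith
  hence "q < p" using q0 by simp
  hence "p * q < p * p" using pp prime_gt_0_nat by simp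
  thus "m < p ^ 2" using mpq unfolding power2_eq_square by linarith
qed


lemma (in group) conj_mem:
  "x \<in> carrier G \<Longrightarrow> (y \<in> x <# D #> inv x) \<longleftrightarrow> (\<exists>h\<in>D. y = x \<otimes> h \<otimes> inv x)"
  unfolding l_coset_def r_coset_def by blast

lemma (in group) normalizer_iff:
  "D \<subseteq> carrier G \<Longrightarrow> x \<in> normalizer G D \<longleftrightarrow> x \<in> carrier G \<and> x <# D #> inv x = D"
  unfolding normalizer_def stabilizer_def by auto

lemma (in group) norm_in_sylow:
  assumes fin: "finite (carrier G)" and pp: "Factorial_Ring.prime p"
    and oG: "order G = m * p ^ k" and npm: "\<not> p dvd m"
    and N: "N \<lhd> G" and cN: "card N = p ^ a"
    and S: "subgroup S G" and cS: "card S = p ^ k"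
  shows "N \<subseteq> S"
proof -
  have sN: "subgroup N G" using N normal_imp_subgroup by blast
  interpret second_isomorphism_grp N G S using N S
    unfolding second_isomorphism_grp_def second_isomorphism_grp_axioms_def by blast
  have sNS: "subgroup (N <#> S) G" by (rule normal_set_mult_subgroup)
  have NG: "N \<subseteq> carrier G" using sN subgroup.subset by blast
  have finN: "finite N" using fin NG finite_subset by blast
  have sNi: "subgroup (N \<inter> S) G" using sN S by (rule subgroups_Inter_pair)
  have "card (N \<inter> S) dvd card N" using sub_card_dvd[OF sNi sN] by auto
  then obtain b where b: "b \<le> a" and cNS: "card (N \<inter> S) = p ^ b"
    using cN divides_primepow_nat[OF pp] by auto
  have pf: "card (N <#> S) * p ^ b = p ^ a * p ^ k"
    using prod_formula[OF fin sN S] cNS cN cS by simp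
  have p1: "p > 1" using pp prime_gt_1_nat by blast
  have "p ^ a = p ^ (a - b) * p ^ b" using b by (simp add: power_add[symmetric])
  hence "card (N <#> S) * p ^ b = (p ^ (a - b) * p ^ k) * p ^ b" using pf by (simp add: ac_simps)
  hence cNS2: "card (N <#> S) = p ^ (a - b) * p ^ k" using p1 by simp
  have "card (N <#> S) dvd order G"
    using sub_card_dvd[OF sNS subgroup_self subgroup.subset[OF sNS]] by (simp add: order_def)
  hence "p ^ (a - b) * p ^ k dvd m * p ^ k" using cNS2 oG by simp
  hence "p ^ (a - b) dvd m" using p1 by simp
  hence "a - b = 0" using npm
    by (metis dvd_power dvd_trans gr0I)
  hence "card (N \<inter> S) = card N" using b cNS cN by simp
  hence "N \<inter> S = N" using finN by (metis Int_lower1 card_subset_eq)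
  thus ?thesis by auto
qed

theorem lemma3:
  fixes G (structure) and p k m q :: nat and P R :: "'a set"
  assumes "group G" and "finite (carrier G)"
    and "Factorial_Ring.prime p" and "k \<ge> 1"
    and "order G = m * p ^ k"
    and "Factorial_Ring.prime q" and "q dvd m" and "\<forall>r. Factorial_Ring.prime r \<and> r dvd m \<longrightarrow> q \<le> r"
    and "1 < real m / real q" and "real m / real q < real p" and "p < m"
    and "sylow_subgroup G p P" and "sylow_subgroup G p R" and "P \<noteq> R"
  shows "generate G (P \<union> R) = carrier G \<and> P \<inter> R = O_p G p \<and> card (P \<inter> R) = p ^ (k - 1)"
proof -
  interpret group G by (rule assms(1))
  note fin = assms(2) and pp = assms(3) and k1 = assms(4) and oG = assms(5)
  note nf = numfacts[OF assms(3,6,7,8,9,10,11)]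
  have Dm: "\<And>d. d dvd m \<Longrightarrow> p \<le> d \<Longrightarrow> d = m" using nf(1) by blast
  have npm: "\<not> p dvd m" and mp2: "m < p ^ 2" using nf(2,3) by auto
  have p1: "p > 1" using pp prime_gt_1_nat by blast
  have m0: "m > 0" using assms(11) by simp
  have mult: "multiplicity p (order G) = k"
  proof -
    have "multiplicity p (m * p ^ k) = multiplicity p m + multiplicity p (p ^ k)"
      using pp m0 p1 by (intro prime_elem_multiplicity_mult_distrib) auto
    also have "\<dots> = k" using npm pp by (simp add: not_dvd_imp_multiplicity_0)
    finally show ?thesis using oG by simp
  qed
  have sP: "subgroup P G" and cP: "card P = p ^ k"
    using assms(12) mult unfolding sylow_subgroup_def by auto
  have sR: "subgroup R G" and cR: "card R = p ^ k"
    using assms(13) mult unfolding sylow_subgroup_def by auto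
  have PG: "P \<subseteq> carrier G" and RG: "R \<subseteq> carrier G" using sP sR subgroup.subset by auto
  have finP: "finite P" "finite R" using fin PG RG finite_subset by auto
  define D where "D = P \<inter> R"
  have sD: "subgroup D G" unfolding D_def using sP sR by (rule subgroups_Inter_pair)
  have "card D dvd card P" using sub_card_dvd[OF sD sP] D_def by auto
  then obtain j where j: "j \<le> k" and cDj: "card D = p ^ j"
    using cP divides_primepow_nat[OF pp] by auto
  have "j \<noteq> k"
  proof
    assume "j = k"
    hence "D = P" using cDj cP finP unfolding D_def by (metis Int_lower1 card_subset_eq)
    hence "P \<subseteq> R" unfolding D_def by auto
    hence "P = R" using cP cR finP by (simp add: card_subset_eq)
    thus False using assms(14) by simp
  qed
  have pf: "card (P <#> R) * p ^ j = p ^ k * p ^ k"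
    using prod_formula[OF fin sP sR] cDj cP cR D_def by simp
  have PRG: "P <#> R \<subseteq> carrier G" using PG RG setmult_subset_G by blast
  have "card (P <#> R) \<le> order G" unfolding order_def using PRG fin by (rule card_mono[rotated])
  hence A: "p ^ k * p ^ k \<le> m * p ^ k * p ^ j" using oG pf by (metis mult_le_mono1)
  have "p ^ k * p ^ j > 0" using p1 by simp
  hence B: "m * (p ^ k * p ^ j) < p ^ 2 * (p ^ k * p ^ j)" using mp2 by simp
  have "p ^ k * p ^ k < p ^ 2 * p ^ k * p ^ j" using A B unfolding mult.assoc by linarith
  hence "p ^ (k + k) < p ^ (2 + k + j)" by (simp only: power_add)
  hence "k + k < 2 + k + j" using p1 power_strict_increasing_iff by blast
  hence jk: "j = k - 1" using j \<open>j \<noteq> k\<close> by arith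
  have cD: "card D = p ^ (k - 1)" using cDj jk by simp
  have "k + k = (k + 1) + (k - 1)" using k1 by arith
  hence "p ^ k * p ^ k = p ^ (k + 1) * p ^ (k - 1)" by (metis power_add)
  hence cPR: "card (P <#> R) = p ^ (k + 1)" using pf jk p1 by simp
  define H where "H = generate G (P \<union> R)"
  have sH: "subgroup H G" unfolding H_def using PG RG by (intro generate_is_subgroup) auto
  have PH: "P \<subseteq> H" and RH: "R \<subseteq> H" unfolding H_def by (auto intro: generate.incl)
  have "P <#> R \<subseteq> H <#> H" using PH RH by (rule mono_set_mult)
  hence PRH: "P <#> R \<subseteq> H" using subgroup_mult_id[OF sH] by simp
  have HG: "H \<subseteq> carrier G" using sH subgroup.subset by blast
  have finH: "finite H" using fin HG finite_subset by blast
  have "card P dvd card H" using sub_card_dvd[OF sP sH PH] .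
  then obtain d where d: "card H = p ^ k * d" using cP by auto
  have "card H dvd order G" using sub_card_dvd[OF sH subgroup_self HG] by (simp add: order_def)
  hence "p ^ k * d dvd p ^ k * m" using d oG by (simp add: ac_simps)
  hence dm: "d dvd m" using p1 by simp
  have "p ^ (k + 1) \<le> card H" using cPR PRH finH by (metis card_mono)
  hence "p ^ k * p \<le> p ^ k * d" using d by simp
  hence "p \<le> d" using p1 by simp
  hence "d = m" using Dm dm by blast
  hence "card H = card (carrier G)" using d oG by (simp add: order_def ac_simps)
  hence Hcar: "H = carrier G" using HG fin by (simp add: card_subset_eq)
  have DP: "D \<subseteq> P" and DR: "D \<subseteq> R" unfolding D_def by auto
  have DG: "D \<subseteq> carrier G" using DP PG by auto
  have conjD: "x \<otimes> h \<otimes> inv x \<in> D" if x: "x \<in> P \<union> R" and h: "h \<in> D" for x h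
  proof (cases "x \<in> P")
    case True show ?thesis using normal_idx[OF fin pp sD sP DP cP cD k1 True h] .
  next
    case False hence xR: "x \<in> R" using x by auto
    show ?thesis using normal_idx[OF fin pp sD sR DR cR cD k1 xR h] .
  qed
  have innorm: "P \<union> R \<subseteq> normalizer G D"
  proof
    fix x assume x: "x \<in> P \<union> R"
    have xG: "x \<in> carrier G" using x PG RG by auto
    have ix: "inv x \<in> P \<union> R" using x subgroup.m_inv_closed[OF sP] subgroup.m_inv_closed[OF sR] by auto
    have "x <# D #> inv x = D"
    proof
      show "x <# D #> inv x \<subseteq> D"
        using conjD[OF x] conj_mem[OF xG] by auto
      show "D \<subseteq> x <# D #> inv x"
      proof
        fix h assume h: "h \<in> D"
        have hG: "h \<in> carrier G" using h DG by auto
        have e: "inv x \<otimes> h \<otimes> inv (inv x) \<in> D" using conjD[OF ix h] .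
        have "h = x \<otimes> (inv x \<otimes> h \<otimes> x) \<otimes> inv x" using hG xG
          by (simp add: m_assoc[symmetric]) (simp add: m_assoc)
        moreover have "inv x \<otimes> h \<otimes> x \<in> D" using e xG by simp
        ultimately show "h \<in> x <# D #> inv x" unfolding conj_mem[OF xG] by blast
      qed
    qed
    thus "x \<in> normalizer G D" using normalizer_iff[OF DG] xG by blast
  qed
  have "H \<subseteq> normalizer G D" unfolding H_def
    using innorm normalizer_imp_subgroup[OF DG] by (rule generate_subgroup_incl)
  hence normD: "D \<lhd> G"
    unfolding normal_inv_iff
  proof (intro conjI sD ballI)
    fix x h assume "H \<subseteq> normalizer G D" "x \<in> carrier G" "h \<in> D"
    hence "x \<in> normalizer G D" using Hcar by auto
    hence xN: "x <# D #> inv x = D" using normalizer_iff[OF DG] by blast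
    show "x \<otimes> h \<otimes> inv x \<in> D"
      using \<open>h \<in> D\<close> xN conj_mem[OF \<open>x \<in> carrier G\<close>] by blast
  qed
  have "D = O_p G p"
  proof
    show "D \<subseteq> O_p G p" unfolding O_p_def p_subgroup_def using normD sD cD by blast
    show "O_p G p \<subseteq> D"
    proof
      fix y assume "y \<in> O_p G p"
      then obtain N a where N: "N \<lhd> G" "card N = p ^ a" "y \<in> N"
        unfolding O_p_def p_subgroup_def by blast
      have "N \<subseteq> P" using norm_in_sylow[OF fin pp oG npm N(1,2) sP cP] .
      moreover have "N \<subseteq> R" using norm_in_sylow[OF fin pp oG npm N(1,2) sR cR] .
      ultimately show "y \<in> D" using N(3) unfolding D_def by auto
    qed
  qed
  thus ?thesis using Hcar cD unfolding H_def D_def by simp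
qed

end
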